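(* Let $D$ be a strong digraph with $D\in\mathcal{LE}_2$. Then $\chi(D)\leq 3$.
   Context: All digraphs are finite, without loops or multiple arcs. Paths and cycles are directed; the length of a path or cycle is its number of arcs. The chromatic number $\chi(D)$ is the least $k$ such that the vertices of $D$ can be coloured with $k$ colours so that any two vertices joined by an arc (in either direction) get different colours. A digraph is strong if for every ordered pair of vertices $x,y$ there is a directed path from $x$ to $y$. For a subdigraph $H$ of a digraph $D$, an ear of $H$ in $D$ is either a directed path in $D$ whose two end vertices lie in $H$ and whose internal vertices do not lie in $H$, or a directed cycle in $D$ having exactly one vertex in $H$. An ear decomposition of a strong digraph $D$ is a sequence $(D_0,D_1,\ldots,D_k)$ of strong subdigraphs of $D$ such that $D_0$ is a directed cycle, $D_{j+1}=D_j\cup P_j$ where $P_j$ is an ear of $D_j$ in $D$ for every $j\in\{0,\ldots,k-1\}$, and $D_k=D$. For an integer $i\geq 1$, $\mathcal{LE}_i$ denotes the family of strong digraphs having an ear decomposition in which every ear has length at least $i$. *)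

theory Defs
  imports Main
begin

definition digraph :: "'a set \<Rightarrow> ('a \<times> 'a) set \<Rightarrow> bool" where
  "digraph V A \<longleftrightarrow> finite V \<and> A \<subseteq> V \<times> V \<and> (\<forall>x. (x, x) \<notin> A)"

definition strong :: "'a set \<Rightarrow> ('a \<times> 'a) set \<Rightarrow> bool" where
  "strong V A \<longleftrightarrow> (\<forall>x\<in>V. \<forall>y\<in>V. (x, y) \<in> A\<^sup>*)"

definition path_arcs :: "'a list \<Rightarrow> ('a \<times> 'a) set" where
  "path_arcs vs = set (zip vs (tl vs))"

definition is_path :: "('a \<times> 'a) set \<Rightarrow> 'a list \<Rightarrow> bool" where
  "is_path A vs \<longleftrightarrow> vs \<noteq> [] \<and> distinct vs \<and> path_arcs vs \<subseteq> A"

definition path_length :: "'a list \<Rightarrow> nat" where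
  "path_length vs = length vs - 1"

definition cycle_arcs :: "'a list \<Rightarrow> ('a \<times> 'a) set" where
  "cycle_arcs vs = set (zip vs (tl vs @ [hd vs]))"

definition is_cycle :: "('a \<times> 'a) set \<Rightarrow> 'a list \<Rightarrow> bool" where
  "is_cycle A vs \<longleftrightarrow> length vs \<ge> 2 \<and> distinct vs \<and> cycle_arcs vs \<subseteq> A"

definition cycle_length :: "'a list \<Rightarrow> nat" where
  "cycle_length vs = length vs"

definition path_ear :: "('a \<times> 'a) set \<Rightarrow> 'a set \<Rightarrow> 'a list \<Rightarrow> bool" where
  "path_ear A W vs \<longleftrightarrow> is_path A vs \<and> hd vs \<in> W \<and> last vs \<in> W
     \<and> (\<forall>v \<in> set (butlast (tl vs)). v \<notin> W)"

definition cycle_ear :: "('a \<times> 'a) set \<Rightarrow> 'a set \<Rightarrow> 'a list \<Rightarrow> bool" where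
  "cycle_ear A W vs \<longleftrightarrow> is_cycle A vs \<and> card (set vs \<inter> W) = 1"

text \<open>ear_reach V A i W B: (W, B) is some D_j of an ear decomposition of D = (V, A)
  whose ears all have length at least i.\<close>

inductive ear_reach :: "'a set \<Rightarrow> ('a \<times> 'a) set \<Rightarrow> nat \<Rightarrow> 'a set \<Rightarrow> ('a \<times> 'a) set \<Rightarrow> bool"
  for V A i where
  base: "is_cycle A C \<Longrightarrow> ear_reach V A i (set C) (cycle_arcs C)"
| step_path: "ear_reach V A i W B \<Longrightarrow> path_ear A W P \<Longrightarrow> path_length P \<ge> i
     \<Longrightarrow> strong (W \<union> set P) (B \<union> path_arcs P)
     \<Longrightarrow> ear_reach V A i (W \<union> set P) (B \<union> path_arcs P)"
| step_cycle: "ear_reach V A i W B \<Longrightarrow> cycle_ear A W P \<Longrightarrow> cycle_length P \<ge> i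
     \<Longrightarrow> strong (W \<union> set P) (B \<union> cycle_arcs P)
     \<Longrightarrow> ear_reach V A i (W \<union> set P) (B \<union> cycle_arcs P)"

definition LE :: "nat \<Rightarrow> 'a set \<Rightarrow> ('a \<times> 'a) set \<Rightarrow> bool" where
  "LE i V A \<longleftrightarrow> strong V A \<and> ear_reach V A i V A"

definition proper_colouring :: "'a set \<Rightarrow> ('a \<times> 'a) set \<Rightarrow> nat \<Rightarrow> ('a \<Rightarrow> nat) \<Rightarrow> bool" where
  "proper_colouring V A k c \<longleftrightarrow> (\<forall>v\<in>V. c v < k) \<and> (\<forall>(x, y)\<in>A. c x \<noteq> c y)"

definition chromatic_number :: "'a set \<Rightarrow> ('a \<times> 'a) set \<Rightarrow> nat" where
  "chromatic_number V A = (LEAST k. \<exists>c. proper_colouring V A k c)"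

end

theory Submission
  imports Defs
begin

lemma pa_cons2: "path_arcs (a # x # r) = insert (a, x) (path_arcs (x # r))"
  by (simp add: path_arcs_def)

lemma ext_col:
  assumes "distinct xs" "xs \<noteq> []" "a \<notin> set xs" "b \<notin> set xs" "(c::'a\<Rightarrow>nat) a < 3" "c b < 3"
  shows "\<exists>f. (\<forall>x\<in>set xs. f x < (3::nat)) \<and>
     (\<forall>(x,y)\<in>path_arcs (a # xs @ [b]). override_on c f (set xs) x \<noteq> override_on c f (set xs) y)"
  using assms
proof (induction xs arbitrary: a c)
  case Nil then show ?case by simp
next
  case (Cons x r)
  show ?case
  proof (cases r)
    case Nil
    obtain k :: nat where k: "k < 3" "k \<noteq> c a" "k \<noteq> c b"
    proof -
      have "{0,1,2::nat} - {c a, c b} \<noteq> {}" by (cases "c a = 0"; cases "c a = 1"; auto)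
      then obtain k where "k \<in> {0,1,2::nat} - {c a, c b}" by blast
      then show ?thesis by (intro that[of k]) auto
    qed
    show ?thesis
      using Cons.prems Nil k
      by (rule_tac x="\<lambda>_. k" in exI) (auto simp: path_arcs_def override_on_def)
  next
    case (Cons y s)
    obtain k :: nat where k: "k < 3" "k \<noteq> c a"
      by (rule_tac that[of "if c a = 0 then 1 else 0"]) auto
    have "\<exists>f. (\<forall>x\<in>set r. f x < (3::nat)) \<and>
     (\<forall>(u,v)\<in>path_arcs (x # r @ [b]). override_on (c(x:=k)) f (set r) u \<noteq> override_on (c(x:=k)) f (set r) v)"
      apply (rule Cons.IH)
      using Cons.prems Cons k by auto
    then obtain f where f: "\<forall>x\<in>set r. f x < (3::nat)"
      "\<forall>(u,v)\<in>path_arcs (x # r @ [b]). override_on (c(x:=k)) f (set r) u \<noteq> override_on (c(x:=k)) f (set r) v"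
      by blast
    have eq: "override_on c (f(x:=k)) (set (x#r)) = override_on (c(x:=k)) f (set r)"
      using Cons.prems by (auto simp: override_on_def fun_eq_iff)
    have pa: "path_arcs (a # (x # r) @ [b]) = insert (a, x) (path_arcs (x # r @ [b]))"
      using Cons by (simp add: path_arcs_def)
    have ax: "override_on (c(x:=k)) f (set r) a \<noteq> override_on (c(x:=k)) f (set r) x"
      using Cons.prems k by (auto simp: override_on_def)
    show ?thesis
      apply (rule exI[of _ "f(x:=k)"])
      unfolding eq pa using f k ax by auto
  qed
qed

lemma zip_sub: "path_arcs P \<subseteq> set P \<times> set P"
  unfolding path_arcs_def
  by (auto dest: set_zip_leftD set_zip_rightD simp: list.set_sel(2) in_mono
      intro: list.set_sel(2))

lemma cyc_path: "cycle_arcs (w # xs) = path_arcs (w # xs @ [w])"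
proof -
  have "zip ((w#xs)@[w]) (xs@[w]) = zip (w#xs) (xs@[w])" by (simp only: zip_append1) simp
  then show ?thesis by (simp add: cycle_arcs_def path_arcs_def)
qed

lemma cyc_sub: "cycle_arcs P \<subseteq> set P \<times> set P"
proof (cases P)
  case Nil then show ?thesis by (simp add: cycle_arcs_def)
next
  case (Cons w xs)
  then show ?thesis using zip_sub[of "w # xs @ [w]"] by (auto simp: cyc_path)
qed

lemma cyc_rot1: "cycle_arcs (rotate1 vs) = cycle_arcs vs"
proof (cases vs)
  case Nil then show ?thesis by simp
next
  case (Cons a t)
  show ?thesis
  proof (cases t)
    case Nil then show ?thesis using Cons by simp
  next
    case (Cons b s)
    have "zip (b # s @ [a]) (s @ [a] @ [b]) = zip (b # s) (s @ [a]) @ [(a,b)]"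
      using zip_append[of "b # s" "s @ [a]" "[a]" "[b]"] by simp
    then show ?thesis using Cons \<open>vs = a # t\<close> by (auto simp: cycle_arcs_def)
  qed
qed

lemma cyc_rot: "cycle_arcs (rotate n vs) = cycle_arcs vs"
  by (induction n) (auto simp: cyc_rot1)

lemma main_ind:
  assumes "ear_reach V A i W B" "i \<ge> 2"
  shows "B \<subseteq> W \<times> W \<and> (\<exists>c. (\<forall>v\<in>W. c v < (3::nat)) \<and> (\<forall>(x,y)\<in>B. c x \<noteq> c y))"
  using assms
proof (induction rule: ear_reach.induct)
  case (base C)
  then obtain w xs where C: "C = w # xs" "xs \<noteq> []"
    unfolding is_cycle_def by (cases C; cases "tl C") auto
  have "distinct C" using base unfolding is_cycle_def by auto
  then obtain f where f: "\<forall>x\<in>set xs. f x < (3::nat)"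
     "\<forall>(x,y)\<in>path_arcs (w # xs @ [w]). override_on (\<lambda>_. 0) f (set xs) x \<noteq> override_on (\<lambda>_. 0) f (set xs) y"
    using ext_col[of xs w w "\<lambda>_. 0"] C by auto
  show ?case
    apply (intro conjI cyc_sub exI[of _ "override_on (\<lambda>_. 0) f (set xs)"])
    using f C by (auto simp: cyc_path override_on_def)
next
  case (step_path W B P)
  then obtain c where c: "\<forall>v\<in>W. c v < (3::nat)" "\<forall>(x,y)\<in>B. c x \<noteq> c y" and BW: "B \<subseteq> W \<times> W" by auto
  have len: "length P \<ge> 3" using step_path by (auto simp: path_length_def)
  define xs where "xs = butlast (tl P)"
  have P: "P = hd P # xs @ [last P]" using len unfolding xs_def
    by (metis One_nat_def Suc_1 Suc_le_length_iff append_butlast_last_id eval_nat_numeral(3) 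
         last_tl list.collapse list.distinct(1) list.sel(3) not_less_eq_eq numeral_le_one_iff semiring_norm(70))
  have xne: "xs \<noteq> []" using len unfolding xs_def by (cases P; cases "tl P"; auto)
  have dP: "distinct P" using step_path unfolding path_ear_def is_path_def by auto
  hence "distinct (hd P # xs @ [last P])" using P by metis
  hence dx: "distinct xs" "hd P \<notin> set xs" "last P \<notin> set xs" by auto
  have xW: "set xs \<inter> W = {}" using step_path unfolding path_ear_def xs_def by auto
  have hl: "hd P \<in> W" "last P \<in> W" using step_path unfolding path_ear_def by auto
  obtain f where f: "\<forall>x\<in>set xs. f x < (3::nat)"
     "\<forall>(x,y)\<in>path_arcs (hd P # xs @ [last P]). override_on c f (set xs) x \<noteq> override_on c f (set xs) y"
    using ext_col[of xs "hd P" "last P" c] dx xne hl c by auto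
  have ag: "\<And>v. v \<in> W \<Longrightarrow> override_on c f (set xs) v = c v" using xW by (auto simp: override_on_def)
  have setP: "W \<union> set P = W \<union> set xs" using hl by (subst P) auto
  show ?case
  proof (intro conjI exI[of _ "override_on c f (set xs)"])
    show "B \<union> path_arcs P \<subseteq> (W \<union> set P) \<times> (W \<union> set P)" using BW zip_sub[of P] by auto
    show "\<forall>v\<in>W \<union> set P. override_on c f (set xs) v < 3" using setP c f ag by (auto simp: override_on_def)
    show "\<forall>(x,y)\<in>B \<union> path_arcs P. override_on c f (set xs) x \<noteq> override_on c f (set xs) y"
    proof
      fix e assume "e \<in> B \<union> path_arcs P"
      then show "case e of (x,y) \<Rightarrow> override_on c f (set xs) x \<noteq> override_on c f (set xs) y"
      proof
        assume eB: "e \<in> B"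
        obtain x y where e: "e = (x, y)" by (cases e)
        have "x \<in> W" "y \<in> W" "c x \<noteq> c y" using BW c(2) eB e by auto
        then show ?thesis using ag e by simp
      next
        assume "e \<in> path_arcs P" then show ?thesis using f P by metis
      qed
    qed
  qed
next
  case (step_cycle W B P)
  then obtain c where c: "\<forall>v\<in>W. c v < (3::nat)" "\<forall>(x,y)\<in>B. c x \<noteq> c y" and BW: "B \<subseteq> W \<times> W" by auto
  obtain w where w: "set P \<inter> W = {w}" using step_cycle unfolding cycle_ear_def
    by (meson card_1_singletonE)
  then obtain j where j: "j < length P" "P ! j = w" by (metis Int_iff in_set_conv_nth insertI1)
  define Q where "Q = rotate j P"
  have cyc: "is_cycle A P" using step_cycle unfolding cycle_ear_def by auto
  have Qp: "set Q = set P" "distinct Q" "cycle_arcs Q = cycle_arcs P" "length Q = length P"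
    using cyc unfolding Q_def is_cycle_def by (auto simp: cyc_rot)
  have hQ: "hd Q = w" unfolding Q_def using j cyc
    by (metis hd_rotate_conv_nth list.size(3) mod_less not_less0)
  obtain xs where Q: "Q = w # xs" "xs \<noteq> []" using Qp hQ cyc unfolding is_cycle_def
    by (cases Q; cases "tl Q") auto
  have dx: "distinct xs" "w \<notin> set xs" using Qp Q by auto
  have xW: "set xs \<inter> W = {}" using w Qp Q dx by auto
  have hl: "w \<in> W" using w by auto
  obtain f where f: "\<forall>x\<in>set xs. f x < (3::nat)"
     "\<forall>(x,y)\<in>path_arcs (w # xs @ [w]). override_on c f (set xs) x \<noteq> override_on c f (set xs) y"
    using ext_col[of xs w w c] dx Q hl c by auto
  have ag: "\<And>v. v \<in> W \<Longrightarrow> override_on c f (set xs) v = c v" using xW by (auto simp: override_on_def)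
  have setP: "W \<union> set P = W \<union> set xs" using hl Qp Q by auto
  have arcs: "cycle_arcs P = path_arcs (w # xs @ [w])" using Qp Q by (simp add: cyc_path)
  show ?case
  proof (intro conjI exI[of _ "override_on c f (set xs)"])
    show "B \<union> cycle_arcs P \<subseteq> (W \<union> set P) \<times> (W \<union> set P)" using BW cyc_sub[of P] by auto
    show "\<forall>v\<in>W \<union> set P. override_on c f (set xs) v < 3" using setP c f ag by (auto simp: override_on_def)
    show "\<forall>(x,y)\<in>B \<union> cycle_arcs P. override_on c f (set xs) x \<noteq> override_on c f (set xs) y"
    proof
      fix e assume "e \<in> B \<union> cycle_arcs P"
      then show "case e of (x,y) \<Rightarrow> override_on c f (set xs) x \<noteq> override_on c f (set xs) y"
      proof
        assume eB: "e \<in> B"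
        obtain x y where e: "e = (x, y)" by (cases e)
        have "x \<in> W" "y \<in> W" "c x \<noteq> c y" using BW c(2) eB e by auto
        then show ?thesis using ag e by simp
      next
        assume "e \<in> cycle_arcs P" then show ?thesis using f arcs by auto
      qed
    qed
  qed
qed

theorem mainTheorem14:
  fixes V :: "'a set" and A :: "('a \<times> 'a) set"
  assumes "digraph V A" and "strong V A" and "LE 2 V A"
  shows "chromatic_number V A \<le> 3"
proof -
  have "ear_reach V A 2 V A" using assms(3) unfolding LE_def by auto
  from main_ind[OF this] obtain c where "\<forall>v\<in>V. c v < (3::nat)" "\<forall>(x,y)\<in>A. c x \<noteq> c y" by auto
  then have "proper_colouring V A 3 c" unfolding proper_colouring_def by auto
  then show ?thesis unfolding chromatic_number_def by (auto intro: Least_le)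
qed

end
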